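(* Every commutative monoid is sofic.
   Context: For a non-empty finite set $X$, $\mathrm{Map}(X)$ is the monoid of all maps $X\to X$ under composition (identity $\mathrm{Id}_X$) with the Hamming metric $d_X(f,g)=|\{x\in X : f(x)\ne g(x)\}|/|X|$. For a monoid $M$ with identity $1_M$, finite $K\subset M$ and $\varepsilon,\alpha>0$, a map $\varphi\colon M\to\mathrm{Map}(X)$ is a $(K,\varepsilon)$-morphism if $d_X(\varphi(k_1k_2),\varphi(k_1)\varphi(k_2))\le\varepsilon$ for all $k_1,k_2\in K$ and $d_X(\varphi(1_M),\mathrm{Id}_X)\le\varepsilon$; it is $(K,\alpha)$-injective if $d_X(\varphi(k_1),\varphi(k_2))\ge\alpha$ for all distinct $k_1,k_2\in K$. $M$ is sofic if for every finite $K\subset M$ and every $\varepsilon>0$ there exist a non-empty finite set $X$ and a $(K,1-\varepsilon)$-injective $(K,\varepsilon)$-morphism $\varphi\colon M\to\mathrm{Map}(X)$. *)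

theory Defs
  imports Complex_Main
begin

text \<open>Maps X \<rightarrow> X for a finite set X are represented as functions nat \<Rightarrow> nat
 mapping X into X; only their values on X matter.\<close>

definition hamming :: "nat set \<Rightarrow> (nat \<Rightarrow> nat) \<Rightarrow> (nat \<Rightarrow> nat) \<Rightarrow> real" where
  "hamming X f g = real (card {x \<in> X. f x \<noteq> g x}) / real (card X)"

definition is_map_into :: "nat set \<Rightarrow> ('m \<Rightarrow> nat \<Rightarrow> nat) \<Rightarrow> bool" where
  "is_map_into X \<phi> \<longleftrightarrow> (\<forall>m x. x \<in> X \<longrightarrow> \<phi> m x \<in> X)"

definition K_eps_morphism ::
  "nat set \<Rightarrow> 'm::monoid_mult set \<Rightarrow> real \<Rightarrow> ('m \<Rightarrow> nat \<Rightarrow> nat) \<Rightarrow> bool" where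
  "K_eps_morphism X K \<epsilon> \<phi> \<longleftrightarrow>
     (\<forall>k1\<in>K. \<forall>k2\<in>K. hamming X (\<phi> (k1 * k2)) (\<phi> k1 \<circ> \<phi> k2) \<le> \<epsilon>) \<and>
     hamming X (\<phi> 1) id \<le> \<epsilon>"

definition K_alpha_injective ::
  "nat set \<Rightarrow> 'm set \<Rightarrow> real \<Rightarrow> ('m \<Rightarrow> nat \<Rightarrow> nat) \<Rightarrow> bool" where
  "K_alpha_injective X K \<alpha> \<phi> \<longleftrightarrow>
     (\<forall>k1\<in>K. \<forall>k2\<in>K. k1 \<noteq> k2 \<longrightarrow> hamming X (\<phi> k1) (\<phi> k2) \<ge> \<alpha>)"

definition sofic_monoid :: "'m::monoid_mult itself \<Rightarrow> bool" where
  "sofic_monoid TYPE('m) \<longleftrightarrow>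
     (\<forall>K :: 'm set. \<forall>\<epsilon>::real. finite K \<and> \<epsilon> > 0 \<longrightarrow>
        (\<exists>X :: nat set. \<exists>\<phi> :: 'm \<Rightarrow> nat \<Rightarrow> nat.
           finite X \<and> X \<noteq> {} \<and> is_map_into X \<phi> \<and>
           K_alpha_injective X K (1 - \<epsilon>) \<phi> \<and> K_eps_morphism X K \<epsilon> \<phi>))"

end

theory Submission imports Defs "HOL-Library.FuncSet" begin

lemma card_transfer:
  assumes bij: "bij_betw h X Y" and gi: "\<forall>y\<in>Y. h (g y) = y" and gx: "\<forall>k\<in>X. g (h k) = k"
    and F: "F ` Y \<subseteq> Y" and G: "G ` Y \<subseteq> Y"
    and eqs: "\<forall>k\<in>X. F' k = g (F (h k)) \<and> G' k = g (G (h k))"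
  shows "card {k\<in>X. F' k \<noteq> G' k} = card {y\<in>Y. F y \<noteq> G y}"
proof -
  have injg: "inj_on g Y" using gi by (metis inj_onI)
  have hY: "\<And>k. k \<in> X \<Longrightarrow> h k \<in> Y" using bij bij_betwE by blast
  have "card {k\<in>X. F' k \<noteq> G' k} = card {k\<in>X. F (h k) \<noteq> G (h k)}"
  proof (intro arg_cong[where f=card] Collect_cong conj_cong refl)
    fix k assume k: "k \<in> X"
    have "F (h k) \<in> Y" "G (h k) \<in> Y" using F G hY[OF k] by auto
    then show "(F' k \<noteq> G' k) = (F (h k) \<noteq> G (h k))"
      using eqs k injg by (metis inj_on_contraD)
  qed
  also have "card {k\<in>X. F (h k) \<noteq> G (h k)} = card (h ` {k\<in>X. F (h k) \<noteq> G (h k)})"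
    by (rule card_image[symmetric], rule inj_on_subset[OF bij_betw_imp_inj_on[OF bij]]) auto
  also have "h ` {k\<in>X. F (h k) \<noteq> G (h k)} = {y\<in>Y. F y \<noteq> G y}"
  proof
    show "h ` {k \<in> X. F (h k) \<noteq> G (h k)} \<subseteq> {y \<in> Y. F y \<noteq> G y}" using hY by auto
    show "{y \<in> Y. F y \<noteq> G y} \<subseteq> h ` {k \<in> X. F (h k) \<noteq> G (h k)}"
    proof
      fix y assume y: "y \<in> {y \<in> Y. F y \<noteq> G y}"
      then obtain k where "k \<in> X" "y = h k" using bij by (auto simp: bij_betw_def)
      then show "y \<in> h ` {k \<in> X. F (h k) \<noteq> G (h k)}" using y by auto
    qed
  qed
  finally show ?thesis .
qed

lemma transfer:
  fixes Y :: "'a set" and \<psi> :: "'m::monoid_mult \<Rightarrow> 'a \<Rightarrow> 'a"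
  assumes fin: "finite Y" and ne: "Y \<noteq> {}" and maps: "\<And>m. \<psi> m ` Y \<subseteq> Y"
  obtains X :: "nat set" and \<phi> where "finite X" "X \<noteq> {}" "is_map_into X \<phi>"
    "\<And>m1 m2. hamming X (\<phi> m1) (\<phi> m2) = real (card {y\<in>Y. \<psi> m1 y \<noteq> \<psi> m2 y}) / real (card Y)"
    "\<And>m1 m2 m3. hamming X (\<phi> m1) (\<phi> m2 \<circ> \<phi> m3) = real (card {y\<in>Y. \<psi> m1 y \<noteq> \<psi> m2 (\<psi> m3 y)}) / real (card Y)"
    "\<And>m. hamming X (\<phi> m) id = real (card {y\<in>Y. \<psi> m y \<noteq> y}) / real (card Y)"
proof -
  obtain h where bij: "bij_betw h {0..<card Y} Y" using ex_bij_betw_nat_finite[OF fin] by blast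
  define X where "X = {0..<card Y}"
  define g where "g = inv_into X h"
  have bijX: "bij_betw h X Y" using bij X_def by simp
  have gi: "\<forall>y\<in>Y. h (g y) = y" using bijX unfolding g_def by (meson bij_betw_inv_into_right)
  have gx: "\<forall>k\<in>X. g (h k) = k" using bijX unfolding g_def by (meson bij_betw_inv_into_left)
  have gY: "\<And>y. y \<in> Y \<Longrightarrow> g y \<in> X" using bijX unfolding g_def
    by (meson bij_betwE bij_betw_inv_into)
  have hY: "\<And>k. k \<in> X \<Longrightarrow> h k \<in> Y" using bijX bij_betwE by blast
  define \<phi> where "\<phi> = (\<lambda>m k. g (\<psi> m (h k)))"
  have cardX: "card X = card Y" using X_def by simp
  have key: "\<And>F G F' G'. F ` Y \<subseteq> Y \<Longrightarrow> G ` Y \<subseteq> Y \<Longrightarrow> (\<forall>k\<in>X. F' k = g (F (h k)) \<and> G' k = g (G (h k)))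
      \<Longrightarrow> hamming X F' G' = real (card {y\<in>Y. F y \<noteq> G y}) / real (card Y)"
  proof -
    fix F G F' G' assume a: "F ` Y \<subseteq> Y" "G ` Y \<subseteq> Y" "\<forall>k\<in>X. F' k = g (F (h k)) \<and> G' k = g (G (h k))"
    have "card {k\<in>X. F' k \<noteq> G' k} = card {y\<in>Y. F y \<noteq> G y}"
      by (rule card_transfer[OF bijX gi gx a])
    then show "hamming X F' G' = real (card {y\<in>Y. F y \<noteq> G y}) / real (card Y)"
      by (simp add: hamming_def cardX)
  qed
  have comp: "\<And>m2 m3 k. k \<in> X \<Longrightarrow> (\<phi> m2 \<circ> \<phi> m3) k = g ((\<psi> m2 \<circ> \<psi> m3) (h k))"
  proof -
    fix m2 m3 k assume k: "k \<in> X"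
    have "\<psi> m3 (h k) \<in> Y" using hY[OF k] maps by blast
    then show "(\<phi> m2 \<circ> \<phi> m3) k = g ((\<psi> m2 \<circ> \<psi> m3) (h k))"
      unfolding \<phi>_def using gi by simp
  qed
  show thesis
  proof (rule that)
    show "finite X" using X_def by simp
    show "X \<noteq> {}" using X_def fin ne by simp
    show "is_map_into X \<phi>" unfolding is_map_into_def \<phi>_def using gY hY maps by blast
    fix m1 m2
    show "hamming X (\<phi> m1) (\<phi> m2) = real (card {y\<in>Y. \<psi> m1 y \<noteq> \<psi> m2 y}) / real (card Y)"
      by (rule key) (auto simp: \<phi>_def maps)
    fix m3
    have c: "(\<psi> m2 \<circ> \<psi> m3) ` Y \<subseteq> Y" using maps by (auto simp: image_subset_iff)
    have "hamming X (\<phi> m1) (\<phi> m2 \<circ> \<phi> m3) = real (card {y\<in>Y. \<psi> m1 y \<noteq> (\<psi> m2 \<circ> \<psi> m3) y}) / real (card Y)"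
      by (rule key[OF maps c]) (intro ballI conjI, simp add: \<phi>_def, erule comp)
    then show "hamming X (\<phi> m1) (\<phi> m2 \<circ> \<phi> m3) = real (card {y\<in>Y. \<psi> m1 y \<noteq> \<psi> m2 (\<psi> m3 y)}) / real (card Y)"
      by simp
  next
    fix m
    have "hamming X (\<phi> m) id = real (card {y\<in>Y. \<psi> m y \<noteq> id y}) / real (card Y)"
      by (rule key[OF maps]) (auto simp: \<phi>_def gx)
    then show "hamming X (\<phi> m) id = real (card {y\<in>Y. \<psi> m y \<noteq> y}) / real (card Y)" by simp
  qed
qed

lemma growth:
  fixes q :: real assumes q: "q > 1"
  shows "\<exists>L::nat. real (L+1) ^ k < q ^ L"
proof -
  define c where "c = ln q"
  have c: "c > 0" using q c_def by simp
  have lim: "(\<lambda>L::nat. (c * real L) ^ k / exp (c * real L)) \<longlonglongrightarrow> 0"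
    by (rule filterlim_compose[OF tendsto_power_div_exp_0])
       (rule filterlim_tendsto_pos_mult_at_top[OF tendsto_const c filterlim_real_sequentially])
  have pos: "(c/2) ^ k > 0" using c by simp
  have "eventually (\<lambda>L. (c * real L) ^ k / exp (c * real L) < (c/2)^k) sequentially"
    using order_tendstoD(2)[OF lim pos] .
  then obtain L0 where L0: "\<And>L. L \<ge> L0 \<Longrightarrow> (c * real L) ^ k / exp (c * real L) < (c/2)^k"
    unfolding eventually_sequentially by blast
  define L where "L = Suc L0"
  have L1: "L \<ge> 1" and LL0: "L \<ge> L0" using L_def by auto
  have e: "exp (c * real L) = q ^ L"
    using exp_of_nat_mult[of L c] q c_def by (simp add: mult.commute)
  have qL: "q ^ L > 0" using q by simp
  have "(c * real L) ^ k / q^L < (c/2)^k" using L0[OF LL0] e by simp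
  hence "(c * real L) ^ k < (c/2)^k * q ^ L" using qL by (simp add: pos_divide_less_eq)
  hence "(2 / c)^k * (c * real L) ^ k < (2/c)^k * ((c/2)^k * q ^ L)"
    using c by (intro mult_strict_left_mono) auto
  moreover have "(2 / c)^k * (c * real L) ^ k = (2 * real L) ^ k"
  proof -
    have "(2 / c)^k * (c * real L) ^ k = (2 / c * (c * real L)) ^ k" by (rule power_mult_distrib[symmetric])
    also have "2 / c * (c * real L) = 2 * real L" using c by simp
    finally show ?thesis .
  qed
  moreover have "(2/c)^k * ((c/2)^k * q ^ L) = q ^ L"
  proof -
    have "(2/c)^k * ((c/2)^k * q ^ L) = ((2/c) * (c/2))^k * q ^ L" by (metis power_mult_distrib mult.assoc)
    also have "(2/c) * (c/2) = 1" using c by simp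
    finally show ?thesis by simp
  qed
  ultimately have "(2 * real L) ^ k < q ^ L" by simp
  moreover have "real (L+1) ^ k \<le> (2 * real L) ^ k"
    using L1 by (intro power_mono) auto
  ultimately show ?thesis by (intro exI[of _ L]) linarith
qed

lemma final_arith:
  fixes e a b c W N s \<epsilon> :: real
  assumes \<epsilon>: "\<epsilon> > 0" and a1: "a \<ge> 1" and ab: "a \<le> b" and ba: "b \<le> (1 + \<epsilon>/2) * a"
    and c0: "c \<ge> 0" and W: "W \<ge> 2 * (1 + c) / \<epsilon>" and W1: "W \<ge> 1"
    and e: "e \<le> (b - a) * W + c" and N1: "a * W \<le> N" and N2: "N \<le> 1 + b * W + c"
    and s: "s \<ge> a * W"
  shows "e / N \<le> \<epsilon> \<and> 1 - \<epsilon> \<le> s / N"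
proof -
  have Npos: "N > 0" using a1 W1 N1 by (smt (verit) mult_ge1_I)
  have cW: "1 + c \<le> \<epsilon> / 2 * W" using W \<epsilon> by (simp add: field_simps)
  have WaW: "W \<le> a * W" using a1 W1 by simp
  have bW: "b * W \<le> a * W + \<epsilon> / 2 * (a * W)"
  proof -
    have "b * W \<le> ((1 + \<epsilon>/2) * a) * W" using ba W1 by (intro mult_right_mono) auto
    then show ?thesis by (simp add: algebra_simps)
  qed
  have "\<epsilon> / 2 * W \<le> \<epsilon> / 2 * (a * W)" using WaW \<epsilon> by simp
  then have "e \<le> \<epsilon> * (a * W)" using e bW cW by (simp add: algebra_simps)
  also have "\<dots> \<le> \<epsilon> * N" using N1 \<epsilon> by simp
  finally have 1: "e / N \<le> \<epsilon>" using Npos by (simp add: divide_le_eq)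
  have "(1 - \<epsilon>) * N \<le> a * W"
  proof (cases "\<epsilon> \<ge> 1")
    case True
    then have "(1 - \<epsilon>) * N \<le> 0" using Npos by (simp add: mult_nonpos_nonneg)
    then show ?thesis using a1 W1 by (smt (verit) mult_ge1_I)
  next
    case False
    have "(1 - \<epsilon>) * N \<le> (1 - \<epsilon>) * (1 + c + (a * W + \<epsilon> / 2 * (a * W)))"
      using False N2 bW by (intro mult_left_mono) auto
    also have "\<dots> = (1 - \<epsilon>) * (1 + c) + (a * W) * (1 - \<epsilon>/2 - \<epsilon> * \<epsilon> / 2)"
      by (simp add: algebra_simps diff_divide_distrib)
    also have "\<dots> \<le> (1 + c) + (a * W) * (1 - \<epsilon>/2)"
    proof -
      have "(1 - \<epsilon>) * (1 + c) \<le> 1 + c" using \<epsilon> c0 by (simp add: algebra_simps)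
      moreover have "(a * W) * (1 - \<epsilon>/2 - \<epsilon> * \<epsilon> / 2) \<le> (a * W) * (1 - \<epsilon>/2)"
        using a1 W1 \<epsilon> by (intro mult_left_mono) auto
      ultimately show ?thesis by linarith
    qed
    also have "\<dots> \<le> a * W" using cW \<open>\<epsilon> / 2 * W \<le> \<epsilon> / 2 * (a * W)\<close> by (simp add: algebra_simps)
    finally show ?thesis .
  qed
  then have "1 - \<epsilon> \<le> a * W / N" using Npos by (simp add: le_divide_eq)
  also have "\<dots> \<le> s / N" using s Npos by (simp add: divide_right_mono)
  finally show ?thesis using 1 by simp
qed

context
  fixes K :: "'m::comm_monoid_mult set"
  assumes finK: "finite K"
begin

definition AA :: "nat \<Rightarrow> 'm set" where
  "AA L = {y. \<exists>f. y = (\<Prod>k\<in>K. k ^ f k) \<and> (\<Sum>k\<in>K. f k) \<le> L}"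

definition TT :: "'m set" where
  "TT = {x. \<forall>p\<in>K. \<forall>q\<in>K. p \<noteq> q \<longrightarrow> p * x \<noteq> q * x}"

lemma AA_sub: "AA L \<subseteq> (\<lambda>f. \<Prod>k\<in>K. k ^ f k) ` (K \<rightarrow>\<^sub>E {..L})"
proof
  fix y assume "y \<in> AA L"
  then obtain f where y: "y = (\<Prod>k\<in>K. k ^ f k)" and s: "(\<Sum>k\<in>K. f k) \<le> L"
    unfolding AA_def by blast
  have "restrict f K \<in> K \<rightarrow>\<^sub>E {..L}"
  proof
    fix k assume "k \<in> K"
    then have "f k \<le> (\<Sum>k\<in>K. f k)" using finK by (intro member_le_sum) auto
    then show "restrict f K k \<in> {..L}" using s \<open>k \<in> K\<close> by simp
  qed auto
  moreover have "y = (\<Prod>k\<in>K. k ^ restrict f K k)" using y by (simp cong: prod.cong)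
  ultimately show "y \<in> (\<lambda>f. \<Prod>k\<in>K. k ^ f k) ` (K \<rightarrow>\<^sub>E {..L})" by blast
qed

lemma AA_finite: "finite (AA L)"
  using AA_sub finK by (meson finite_PiE finite_atMost finite_imageI finite_subset)

lemma AA_card: "card (AA L) \<le> (L+1) ^ card K"
proof -
  have "card (AA L) \<le> card ((\<lambda>f. \<Prod>k\<in>K. k ^ f k) ` (K \<rightarrow>\<^sub>E {..L}))"
    using AA_sub finK by (intro card_mono) (auto intro: finite_PiE)
  also have "\<dots> \<le> card (K \<rightarrow>\<^sub>E {..L})" by (rule card_image_le) (simp add: finK finite_PiE)
  also have "\<dots> = (L+1) ^ card K" using finK by (simp add: card_PiE)
  finally show ?thesis .
qed

lemma AA_mono: "L \<le> L' \<Longrightarrow> AA L \<subseteq> AA L'"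
  unfolding AA_def by auto

lemma AA_one: "1 \<in> AA 0"
  unfolding AA_def by (intro CollectI exI[of _ "\<lambda>_. 0"]) simp

lemma AA_mult: assumes p: "p \<in> K" and x: "x \<in> AA L" shows "p * x \<in> AA (Suc L)"
proof -
  obtain f where xf: "x = (\<Prod>k\<in>K. k ^ f k)" and s: "(\<Sum>k\<in>K. f k) \<le> L"
    using x unfolding AA_def by blast
  define g where "g = f(p := Suc (f p))"
  have "(\<Prod>k\<in>K. k ^ g k) = p ^ g p * (\<Prod>k\<in>K-{p}. k ^ g k)"
    using finK p by (rule prod.remove)
  also have "(\<Prod>k\<in>K-{p}. k ^ g k) = (\<Prod>k\<in>K-{p}. k ^ f k)"
    by (rule prod.cong) (auto simp: g_def)
  also have "p ^ g p = p * p ^ f p" by (simp add: g_def)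
  finally have "(\<Prod>k\<in>K. k ^ g k) = p * (p ^ f p * (\<Prod>k\<in>K-{p}. k ^ f k))"
    by (simp add: mult.assoc)
  also have "p ^ f p * (\<Prod>k\<in>K-{p}. k ^ f k) = x"
    using xf finK p by (simp add: prod.remove)
  finally have e1: "p * x = (\<Prod>k\<in>K. k ^ g k)" by simp
  have "(\<Sum>k\<in>K. g k) = g p + (\<Sum>k\<in>K-{p}. g k)"
    using finK p by (rule sum.remove)
  also have "(\<Sum>k\<in>K-{p}. g k) = (\<Sum>k\<in>K-{p}. f k)"
    by (rule sum.cong) (auto simp: g_def)
  finally have "(\<Sum>k\<in>K. g k) = Suc (f p + (\<Sum>k\<in>K-{p}. f k))" by (simp add: g_def)
  also have "f p + (\<Sum>k\<in>K-{p}. f k) = (\<Sum>k\<in>K. f k)"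
    using finK p by (simp add: sum.remove)
  finally have "(\<Sum>k\<in>K. g k) \<le> Suc L" using s by simp
  then show ?thesis using e1 unfolding AA_def by blast
qed

lemma TT_one: "1 \<in> TT" unfolding TT_def by simp

lemma TT_ideal: assumes "x \<notin> TT" shows "m * x \<notin> TT"
proof -
  obtain p q where "p \<in> K" "q \<in> K" "p \<noteq> q" "p * x = q * x" using assms unfolding TT_def by blast
  then have "p * (m * x) = q * (m * x)" by (metis mult.left_commute)
  then show ?thesis using \<open>p \<in> K\<close> \<open>q \<in> K\<close> \<open>p \<noteq> q\<close> unfolding TT_def by blast
qed

lemma choose_L:
  fixes d :: real assumes d: "d > 0"
  shows "\<exists>L. real (card (TT \<inter> AA (Suc L))) \<le> (1 + d) * real (card (TT \<inter> AA L))"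
proof (rule ccontr)
  assume "\<not> ?thesis"
  then have H: "\<And>L. (1 + d) * real (card (TT \<inter> AA L)) < real (card (TT \<inter> AA (Suc L)))" using not_le by blast
  have "(1 + d) ^ L \<le> real (card (TT \<inter> AA L))" for L
  proof (induction L)
    case 0
    have "1 \<in> TT \<inter> AA 0" using TT_one AA_one by simp
    then have "card (TT \<inter> AA 0) \<noteq> 0" using AA_finite by auto
    then show ?case by simp
  next
    case (Suc L)
    have "(1+d)^Suc L = (1+d) * (1+d)^L" by simp
    also have "\<dots> \<le> (1+d) * real (card (TT \<inter> AA L))" using Suc d by (intro mult_left_mono) auto
    also have "\<dots> < real (card (TT \<inter> AA (Suc L)))" by (rule H)
    finally show ?case by simp
  qed
  moreover have "card (TT \<inter> AA L) \<le> (L+1) ^ card K" for L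
    using AA_card[of L] AA_finite[of L] by (meson card_mono inf_le2 le_trans)
  ultimately have "(1 + d) ^ L \<le> real (L+1) ^ card K" for L
    by (metis of_nat_le_iff of_nat_power order_trans)
  moreover obtain L where "real (L+1) ^ card K < (1+d) ^ L" using growth[of "1+d"] d by auto
  ultimately show False by (meson not_le)
qed

lemma main:
  fixes \<epsilon> :: real assumes \<epsilon>: "\<epsilon> > 0"
  shows "\<exists>X :: nat set. \<exists>\<phi> :: 'm \<Rightarrow> nat \<Rightarrow> nat.
           finite X \<and> X \<noteq> {} \<and> is_map_into X \<phi> \<and>
           K_alpha_injective X K (1 - \<epsilon>) \<phi> \<and> K_eps_morphism X K \<epsilon> \<phi>"
proof -
  obtain L0 where L0: "real (card (TT \<inter> AA (Suc L0))) \<le> (1 + \<epsilon>/2) * real (card (TT \<inter> AA L0))"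
    using choose_L[of "\<epsilon>/2"] \<epsilon> by auto
  define P0 where "P0 = TT \<inter> AA L0"
  define P1 where "P1 = TT \<inter> AA (Suc L0)"
  define Q where "Q = AA (Suc (Suc L0))"
  define a where "a = card P0"
  define b where "b = card P1"
  define c where "c = card Q"
  define W where "W = nat \<lceil>2 * (1 + real c) / \<epsilon>\<rceil> + 1"
  define n where "n = (\<lambda>x. if x \<in> P1 then W else if x \<in> Q then 1 else (0::nat))"
  define Y where "Y = insert None (Some ` {(x,i). x \<in> Q \<and> i < n x})"
  define \<psi> where "\<psi> = (\<lambda>m y. case y of None \<Rightarrow> None
      | Some (x,i) \<Rightarrow> if 0 < n (m*x) then Some (m*x, min i (n (m*x) - 1)) else None)"
  have finQ: "finite Q" unfolding Q_def by (rule AA_finite)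
  have P01: "P0 \<subseteq> P1" unfolding P0_def P1_def using AA_mono[of L0 "Suc L0"] by auto
  have P1Q: "P1 \<subseteq> Q" unfolding P1_def Q_def using AA_mono[of "Suc L0" "Suc (Suc L0)"] by auto
  have finP1: "finite P1" using P1Q finQ finite_subset by blast
  have finP0: "finite P0" using P01 finP1 finite_subset by blast
  have W1: "W \<ge> 1" unfolding W_def by simp
  have Wreal: "real W \<ge> 2 * (1 + real c) / \<epsilon>" unfolding W_def by linarith
  have nW: "n x \<le> W" for x unfolding n_def using W1 by auto
  have npos: "0 < n x \<longleftrightarrow> x \<in> Q" for x unfolding n_def using W1 P1Q by auto
  have nP1: "x \<in> P1 \<Longrightarrow> n x = W" for x unfolding n_def by simp
  have nT: "x \<notin> P1 \<Longrightarrow> x \<in> Q \<Longrightarrow> n x = 1" for x unfolding n_def by simp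
  have psiN: "\<psi> m None = None" for m unfolding \<psi>_def by simp
  have psiS: "\<psi> m (Some (x,i)) = (if 0 < n (m*x) then Some (m*x, min i (n (m*x) - 1)) else None)" for m x i
    unfolding \<psi>_def by simp
  have YS: "Some (x,i) \<in> Y \<longleftrightarrow> x \<in> Q \<and> i < n x" for x i unfolding Y_def by auto
  have maps: "\<psi> m ` Y \<subseteq> Y" for m
  proof
    fix z assume "z \<in> \<psi> m ` Y"
    then obtain y where y: "y \<in> Y" "z = \<psi> m y" by blast
    show "z \<in> Y"
    proof (cases y)
      case None then show ?thesis using y psiN Y_def by simp
    next
      case (Some p)
      then obtain x i where p: "y = Some (x,i)" by (cases p) auto
      show ?thesis
      proof (cases "0 < n (m*x)")
        case True
        then have "m*x \<in> Q" using npos by simp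
        moreover have "min i (n (m*x) - 1) < n (m*x)" using True by simp
        ultimately show ?thesis using y p psiS True YS by simp
      next
        case False then show ?thesis using y p psiS Y_def by simp
      qed
    qed
  qed
  have Ysub: "Y \<subseteq> insert None (Some ` (P1 \<times> {..<W} \<union> Q \<times> {0}))"
  proof
    fix y assume y: "y \<in> Y"
    show "y \<in> insert None (Some ` (P1 \<times> {..<W} \<union> Q \<times> {0}))"
    proof (cases y)
      case None then show ?thesis by simp
    next
      case (Some p)
      then obtain x i where p: "y = Some (x,i)" by (cases p) auto
      then have xi: "x \<in> Q" "i < n x" using y YS by auto
      show ?thesis
      proof (cases "x \<in> P1")
        case True then show ?thesis using xi nP1 p by auto
      next
        case False then show ?thesis using xi nT p by auto
      qed
    qed
  qed
  have finY: "finite Y"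
    using finP1 finQ by (intro finite_subset[OF Ysub] finite.insertI finite_imageI finite_UnI finite_cartesian_product) auto
  have Yne: "Y \<noteq> {}" unfolding Y_def by simp
  have cardY_le: "card Y \<le> Suc (b * W + c)"
  proof -
    have "card Y \<le> card (insert None (Some ` (P1 \<times> {..<W} \<union> Q \<times> {0})))"
      using Ysub finP1 finQ by (intro card_mono) auto
    also have "\<dots> \<le> Suc (card (Some ` (P1 \<times> {..<W} \<union> Q \<times> {0})))" using finP1 finQ by (simp add: card_insert_if)
    also have "card (Some ` (P1 \<times> {..<W} \<union> Q \<times> {0})) \<le> card (P1 \<times> {..<W} \<union> Q \<times> {0})"
      by (rule card_image_le) (use finP1 finQ in auto)
    also have "\<dots> \<le> card (P1 \<times> {..<W}) + card (Q \<times> {0::nat})" using card_Un_le by blast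
    also have "\<dots> = b * W + c" unfolding b_def c_def by (simp add: card_cartesian_product)
    finally show ?thesis by simp
  qed
  have S0sub: "Some ` (P0 \<times> {..<W}) \<subseteq> Y"
  proof
    fix y assume "y \<in> Some ` (P0 \<times> {..<W})"
    then obtain x i where y: "y = Some (x,i)" "x \<in> P0" "i < W" by auto
    then have "x \<in> P1" using P01 by auto
    then show "y \<in> Y" using y YS nP1 P1Q by auto
  qed
  have cardS0: "card (Some ` (P0 \<times> {..<W})) = a * W"
    unfolding a_def by (subst card_image) (auto simp: card_cartesian_product)
  have cardY_ge: "a * W \<le> card Y" using card_mono[OF finY S0sub] cardS0 by simp
  have sep: "a * W \<le> card {y\<in>Y. \<psi> p y \<noteq> \<psi> q y}" if pq: "p \<in> K" "q \<in> K" "p \<noteq> q" for p q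
  proof -
    have "Some ` (P0 \<times> {..<W}) \<subseteq> {y\<in>Y. \<psi> p y \<noteq> \<psi> q y}"
    proof
      fix y assume y0: "y \<in> Some ` (P0 \<times> {..<W})"
      then obtain x i where y: "y = Some (x,i)" "x \<in> P0" "i < W" by auto
      have xT: "x \<in> TT" and xA: "x \<in> AA L0" using y P0_def by auto
      have "p*x \<in> Q" "q*x \<in> Q" unfolding Q_def using AA_mult[OF pq(1) xA] AA_mult[OF pq(2) xA]
          AA_mono[of "Suc L0" "Suc (Suc L0)"] by auto
      then have "0 < n (p*x)" "0 < n (q*x)" using npos by auto
      moreover have "p*x \<noteq> q*x" using xT pq unfolding TT_def by blast
      ultimately have "\<psi> p y \<noteq> \<psi> q y" using y psiS by simp
      then show "y \<in> {y\<in>Y. \<psi> p y \<noteq> \<psi> q y}" using y0 S0sub by auto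
    qed
    moreover have "finite {y\<in>Y. \<psi> p y \<noteq> \<psi> q y}" by (rule finite_subset[OF _ finY]) blast
    ultimately have "card (Some ` (P0 \<times> {..<W})) \<le> card {y\<in>Y. \<psi> p y \<noteq> \<psi> q y}"
      by (intro card_mono)
    then show ?thesis using cardS0 by simp
  qed
  have err: "card {y\<in>Y. \<psi> (p*q) y \<noteq> \<psi> p (\<psi> q y)} \<le> (b - a) * W + c" if pq: "p \<in> K" "q \<in> K" for p q
  proof -
    have sub: "{y\<in>Y. \<psi> (p*q) y \<noteq> \<psi> p (\<psi> q y)} \<subseteq> Some ` ((P1 - P0) \<times> {..<W} \<union> Q \<times> {0})"
    proof
      fix y assume y: "y \<in> {y\<in>Y. \<psi> (p*q) y \<noteq> \<psi> p (\<psi> q y)}"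
      show "y \<in> Some ` ((P1 - P0) \<times> {..<W} \<union> Q \<times> {0})"
      proof (cases y)
        case None then show ?thesis using y psiN by simp
      next
        case (Some pr)
        then obtain x i where yx: "y = Some (x,i)" by (cases pr) auto
        then have xi: "x \<in> Q" "i < n x" using y YS by auto
        show ?thesis
        proof (cases "x \<in> P1")
          case False then show ?thesis using xi nT yx by auto
        next
          case True
          show ?thesis
          proof (cases "x \<in> P0")
            case False then show ?thesis using True xi nP1 yx by auto
          next
            case xP0: True
            have iW: "i < W" using xi nP1 True by simp
            have xA: "x \<in> AA L0" using xP0 P0_def by simp
            define z where "z = q * x"
            have zA: "z \<in> AA (Suc L0)" unfolding z_def by (rule AA_mult[OF pq(2) xA])
            have zQ: "z \<in> Q" using zA AA_mono[of "Suc L0" "Suc (Suc L0)"] Q_def by auto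
            have pqx: "(p*q)*x = p*z" unfolding z_def by (simp add: mult.assoc)
            have e1: "\<psi> q y = (if 0 < n z then Some (z, min i (n z - 1)) else None)"
            proof -
              have "\<psi> q y = \<psi> q (Some (x,i))" using yx by (rule arg_cong)
              also have "\<dots> = (if 0 < n (q*x) then Some (q*x, min i (n (q*x) - 1)) else None)" by (rule psiS)
              finally show ?thesis unfolding z_def .
            qed
            have e2: "\<psi> (p*q) y = (if 0 < n (p*z) then Some (p*z, min i (n (p*z) - 1)) else None)"
            proof -
              have "\<psi> (p*q) y = \<psi> (p*q) (Some (x,i))" using yx by (rule arg_cong)
              also have "\<dots> = (if 0 < n ((p*q)*x) then Some ((p*q)*x, min i (n ((p*q)*x) - 1)) else None)" by (rule psiS)
              finally show ?thesis unfolding pqx .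
            qed
            have eq: "\<psi> (p*q) y = \<psi> p (\<psi> q y)"
            proof (cases "z \<in> TT")
              case True
              then have "z \<in> P1" using zA P1_def by simp
              then have nz: "n z = W" by (rule nP1)
              have mi: "min i (n z - 1) = i" using nz iW by simp
              have "\<psi> q y = Some (z, i)" using e1 nz W1 mi by simp
              moreover have "\<psi> p (Some (z,i)) = (if 0 < n (p*z) then Some (p*z, min i (n (p*z) - 1)) else None)"
                by (rule psiS)
              ultimately show ?thesis using e2 by simp
            next
              case False
              then have "z \<notin> P1" using P1_def by simp
              then have nz: "n z = 1" using nT zQ by simp
              have "p*z \<notin> TT" using False by (rule TT_ideal)
              then have "p*z \<notin> P1" using P1_def by simp
              then have nle: "n (p*z) \<le> 1" unfolding n_def by simp
              have "\<psi> q y = Some (z, 0)" using e1 nz by simp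
              moreover have "\<psi> p (Some (z,0)) = (if 0 < n (p*z) then Some (p*z, min 0 (n (p*z) - 1)) else None)"
                by (rule psiS)
              moreover have "min i (n (p*z) - 1) = 0" using nle by simp
              ultimately show ?thesis using e2 by simp
            qed
            then show ?thesis using y by simp
          qed
        qed
      qed
    qed
    have "card {y\<in>Y. \<psi> (p*q) y \<noteq> \<psi> p (\<psi> q y)} \<le> card (Some ` ((P1 - P0) \<times> {..<W} \<union> Q \<times> {0}))"
      using sub finP1 finQ by (intro card_mono) auto
    also have "\<dots> \<le> card ((P1 - P0) \<times> {..<W} \<union> Q \<times> {0})"
      by (rule card_image_le) (use finP1 finQ in auto)
    also have "\<dots> \<le> card ((P1 - P0) \<times> {..<W}) + card (Q \<times> {0::nat})" using card_Un_le by blast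
    also have "\<dots> = (b - a) * W + c"
      unfolding a_def b_def c_def using card_Diff_subset[OF finP0 P01] by (simp add: card_cartesian_product)
    finally show ?thesis .
  qed
  have idY: "{y\<in>Y. \<psi> 1 y \<noteq> y} = {}"
  proof -
    have "\<psi> 1 y = y" if "y \<in> Y" for y
    proof (cases y)
      case None then show ?thesis using psiN by simp
    next
      case (Some pr)
      obtain x i where pr: "pr = (x,i)" by (cases pr) blast
      have yx: "y = Some (x,i)" using Some unfolding pr .
      have "Some (x,i) \<in> Y" using that unfolding yx .
      then have xi: "x \<in> Q" "i < n x" unfolding YS by blast+
      have "\<psi> 1 y = \<psi> 1 (Some (x,i))" using yx by (rule arg_cong)
      also have "\<dots> = (if 0 < n (1*x) then Some (1*x, min i (n (1*x) - 1)) else None)" by (rule psiS)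
      also have "\<dots> = Some (x, i)" using xi by simp
      finally show ?thesis using yx by simp
    qed
    then show ?thesis by blast
  qed
  obtain X \<phi> where X: "finite X" "X \<noteq> {}" "is_map_into X \<phi>"
    and h1: "\<And>m1 m2. hamming X (\<phi> m1) (\<phi> m2) = real (card {y\<in>Y. \<psi> m1 y \<noteq> \<psi> m2 y}) / real (card Y)"
    and h2: "\<And>m1 m2 m3. hamming X (\<phi> m1) (\<phi> m2 \<circ> \<phi> m3) = real (card {y\<in>Y. \<psi> m1 y \<noteq> \<psi> m2 (\<psi> m3 y)}) / real (card Y)"
    and h3: "\<And>m. hamming X (\<phi> m) id = real (card {y\<in>Y. \<psi> m y \<noteq> y}) / real (card Y)"
    by (rule transfer[where \<psi>=\<psi>, OF finY Yne maps]) (rule that)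
  have a1: "a \<ge> 1"
  proof -
    have "1 \<in> P0" unfolding P0_def using TT_one AA_one AA_mono[of 0 L0] by auto
    then show ?thesis unfolding a_def using finP0 by (metis card_0_eq empty_iff less_one not_le)
  qed
  have ab: "a \<le> b" unfolding a_def b_def using card_mono[OF finP1 P01] .
  have ba: "real b \<le> (1 + \<epsilon>/2) * real a" using L0 unfolding a_def b_def P0_def P1_def .
  have ar: "\<And>e s. real e \<le> (real b - real a) * real W + real c \<Longrightarrow> real s \<ge> real a * real W \<Longrightarrow>
      real e / real (card Y) \<le> \<epsilon> \<and> 1 - \<epsilon> \<le> real s / real (card Y)"
  proof -
    fix e s assume e: "real e \<le> (real b - real a) * real W + real c" and s: "real s \<ge> real a * real W"
    show "real e / real (card Y) \<le> \<epsilon> \<and> 1 - \<epsilon> \<le> real s / real (card Y)"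
    proof (rule final_arith[OF \<epsilon> _ _ ba _ Wreal _ e _ _ s])
      show "1 \<le> real a" using a1 by simp
      show "real a \<le> real b" using ab by simp
      show "0 \<le> real c" by simp
      show "1 \<le> real W" using W1 by simp
      have "real (a * W) \<le> real (card Y)" using cardY_ge by (simp only: of_nat_le_iff)
      then show "real a * real W \<le> real (card Y)" by simp
      have "real (card Y) \<le> real (Suc (b * W + c))" using cardY_le by (simp only: of_nat_le_iff)
      then show "real (card Y) \<le> 1 + real b * real W + real c" by simp
    qed
  qed
  show ?thesis
  proof (intro exI[of _ X] exI[of _ \<phi>] conjI X(1) X(2) X(3))
    show "K_alpha_injective X K (1 - \<epsilon>) \<phi>"
      unfolding K_alpha_injective_def
    proof (intro ballI impI)
      fix p q assume "p \<in> K" "q \<in> K" "p \<noteq> q"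
      then have "a * W \<le> card {y\<in>Y. \<psi> p y \<noteq> \<psi> q y}" by (rule sep)
      then have "real (a * W) \<le> real (card {y\<in>Y. \<psi> p y \<noteq> \<psi> q y})" by (simp only: of_nat_le_iff)
      then have X1: "real a * real W \<le> real (card {y\<in>Y. \<psi> p y \<noteq> \<psi> q y})" by simp
      have nn: "real (0::nat) \<le> (real b - real a) * real W + real c" using ab by simp
      have "1 - \<epsilon> \<le> real (card {y\<in>Y. \<psi> p y \<noteq> \<psi> q y}) / real (card Y)"
        by (rule conjunct2[OF ar[OF nn X1]])
      then show "1 - \<epsilon> \<le> hamming X (\<phi> p) (\<phi> q)" using h1 by simp
    qed
    show "K_eps_morphism X K \<epsilon> \<phi>"
      unfolding K_eps_morphism_def
    proof (intro ballI conjI)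
      fix p q assume "p \<in> K" "q \<in> K"
      then have "real (card {y\<in>Y. \<psi> (p*q) y \<noteq> \<psi> p (\<psi> q y)}) \<le> real ((b - a) * W + c)"
        using err by (simp only: of_nat_le_iff)
      also have "\<dots> = (real b - real a) * real W + real c" using ab by (simp add: of_nat_diff)
      finally have "real (card {y\<in>Y. \<psi> (p*q) y \<noteq> \<psi> p (\<psi> q y)}) / real (card Y) \<le> \<epsilon>"
        using ar[of _ "a * W"] by simp
      then show "hamming X (\<phi> (p * q)) (\<phi> p \<circ> \<phi> q) \<le> \<epsilon>" using h2 by simp
    next
      have "hamming X (\<phi> 1) id = 0" unfolding h3 idY by simp
      then show "hamming X (\<phi> 1) id \<le> \<epsilon>" using \<epsilon> by simp
    qed
  qed
qed

end

theorem proposition4p3: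
  shows "sofic_monoid TYPE('m::comm_monoid_mult)"
  unfolding sofic_monoid_def using main by blast

end
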